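(* Let $f:\mathbb{R}^d\to\mathbb{R}$ be $\mu$-strongly convex and $L$-smooth, with condition number $\kappa=L/\mu$, and let its unique minimizer $x^\star$ satisfy $\|x^\star\|\le r$. Consider SGD iterates $x^{(k+1)}=x^{(k)}-\eta\,\nabla f(x^{(k)};\xi^{(k)})$ with learning rate $\eta\in(0,1/L]$, where the stochastic gradient satisfies $\mathbb{E}[\nabla f(x^{(k)};\xi^{(k)})\mid x^{(k)}]=\nabla f(x^{(k)})$ and $\mathbb{E}\big[\|\nabla f(x^{(k)};\xi^{(k)})-\nabla f(x^{(k)})\|^2\mid x^{(k)}\big]\le\sigma^2$. Define $$R=r+\sqrt{\max(3,\kappa)}\,\sqrt{2r^2+\frac{\sigma^2}{L^2}}.$$ Then for every $k$, if $\|x^{(k)}\|\le R$, then $\mathbb{E}\big[\|x^{(k+1)}\|^2\,\big|\,x^{(k)}\big]\le R^2$; i.e. SGD is stable with respect to the second moment with radius $R$.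
   Context: $\|\cdot\|$ denotes the Euclidean norm. Stability with respect to the second moment: there exist a finite constant $R$ and an index $k_0$ such that for all $k\ge k_0$, whenever $\|x^{(k)}\|^2\le R^2$, one has $\mathbb{E}[\|x^{(k+1)}\|^2\mid x^{(k)}]\le R^2$. *)

theory Defs
  imports "HOL-Probability.Probability"
begin

definition strongly_convex :: "real \<Rightarrow> ('a::real_inner \<Rightarrow> real) \<Rightarrow> bool" where
  "strongly_convex \<mu> f \<longleftrightarrow> convex_on UNIV (\<lambda>x. f x - \<mu> / 2 * (norm x)\<^sup>2)"

definition L_smooth :: "real \<Rightarrow> ('a::real_inner \<Rightarrow> real) \<Rightarrow> ('a \<Rightarrow> 'a) \<Rightarrow> bool" where
  "L_smooth L f grad \<longleftrightarrow>
     (\<forall>x. (f has_derivative (\<lambda>h. grad x \<bullet> h)) (at x)) \<and>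
     (\<forall>x y. norm (grad x - grad y) \<le> L * norm (x - y))"

end

theory Submission
  imports Defs
begin
lemma grad_ineq:
  fixes h :: "'a::real_inner \<Rightarrow> real"
  assumes cv: "convex_on UNIV h" and d: "(h has_derivative (\<lambda>v. G \<bullet> v)) (at x)"
  shows "h x + G \<bullet> (y - x) \<le> h y"
proof -
  define \<phi> where "\<phi> t = h (x + t *\<^sub>R (y - x))" for t :: real
  have "convex_on UNIV \<phi>"
  proof (rule convex_onI)
    fix t a b :: real assume t: "0 < t" "t < 1"
    have "(1 - t) *\<^sub>R (x + a *\<^sub>R (y - x)) + t *\<^sub>R (x + b *\<^sub>R (y - x))
        = x + ((1 - t) * a + t * b) *\<^sub>R (y - x)"
      by (simp add: algebra_simps)
    then show "\<phi> ((1 - t) *\<^sub>R a + t *\<^sub>R b) \<le> (1 - t) * \<phi> a + t * \<phi> b"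
      using convex_onD[OF cv, of t "x + a *\<^sub>R (y - x)" "x + b *\<^sub>R (y - x)"] t
      by (simp add: \<phi>_def)
  qed simp
  moreover have der: "(\<phi> has_field_derivative (G \<bullet> (y - x))) (at 0)"
  proof -
    have l: "((\<lambda>t::real. x + t *\<^sub>R (y - x)) has_derivative (\<lambda>s. s *\<^sub>R (y - x))) (at 0)"
      by (auto intro!: derivative_eq_intros)
    have d': "(h has_derivative (\<lambda>v. G \<bullet> v)) (at (x + 0 *\<^sub>R (y - x)))" using d by simp
    have "((\<lambda>t. h (x + t *\<^sub>R (y - x))) has_derivative (\<lambda>s. G \<bullet> (s *\<^sub>R (y - x)))) (at 0)"
      using has_derivative_compose[OF l d'] by simp
    moreover have "(\<lambda>s. G \<bullet> (s *\<^sub>R (y - x))) = (*) (G \<bullet> (y - x))"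
      by (rule ext) (simp add: mult.commute)
    ultimately show ?thesis
      unfolding \<phi>_def has_field_derivative_def by simp
  qed
  ultimately have "\<phi> 1 - \<phi> 0 \<ge> (G \<bullet> (y - x)) * (1 - 0)"
    by (intro convex_on_imp_above_tangent[where A=UNIV]) simp_all
  then show ?thesis by (simp add: \<phi>_def)
qed


lemma descent:
  fixes f :: "'a::real_inner \<Rightarrow> real"
  assumes d: "\<And>x. (f has_derivative (\<lambda>h. grad x \<bullet> h)) (at x)"
    and lip: "\<And>x y. norm (grad x - grad y) \<le> L * norm (x - y)"
  shows "f y \<le> f x + grad x \<bullet> (y - x) + L / 2 * (norm (y - x))\<^sup>2"
proof -
  define dd where "dd = y - x"
  define \<psi> where "\<psi> t = f (x + t *\<^sub>R dd) - t * (grad x \<bullet> dd) - L / 2 * t^2 * (norm dd)\<^sup>2" for t :: real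
  define \<psi>' where "\<psi>' t = (\<lambda>s. s * (grad (x + t *\<^sub>R dd) \<bullet> dd - grad x \<bullet> dd - L * t * (norm dd)\<^sup>2))" for t :: real
  have der: "(\<psi> has_derivative \<psi>' t) (at t within {0..1})" for t
  proof -
    have l: "((\<lambda>t::real. x + t *\<^sub>R dd) has_derivative (\<lambda>s. s *\<^sub>R dd)) (at t)"
      by (auto intro!: derivative_eq_intros)
    have c: "((\<lambda>t. f (x + t *\<^sub>R dd)) has_derivative (\<lambda>s. grad (x + t *\<^sub>R dd) \<bullet> (s *\<^sub>R dd))) (at t)"
      using has_derivative_compose[OF l d] by simp
    moreover have "(\<lambda>s. grad (x + t *\<^sub>R dd) \<bullet> (s *\<^sub>R dd)) = (*) (grad (x + t *\<^sub>R dd) \<bullet> dd)"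
      by (rule ext) (simp add: mult.commute)
    ultimately have c': "((\<lambda>t. f (x + t *\<^sub>R dd)) has_real_derivative (grad (x + t *\<^sub>R dd) \<bullet> dd)) (at t)"
      unfolding has_field_derivative_def by simp
    have "(\<psi> has_real_derivative (grad (x + t *\<^sub>R dd) \<bullet> dd - grad x \<bullet> dd - L * t * (norm dd)\<^sup>2)) (at t)"
      unfolding \<psi>_def
      by (auto intro!: derivative_eq_intros c' simp: algebra_simps power2_eq_square)
    moreover have "(*) (grad (x + t *\<^sub>R dd) \<bullet> dd - grad x \<bullet> dd - L * t * (norm dd)\<^sup>2) = \<psi>' t"
      by (rule ext) (simp add: \<psi>'_def mult.commute)
    ultimately have "(\<psi> has_derivative \<psi>' t) (at t)"
      unfolding has_field_derivative_def by simp
    then show ?thesis by (rule has_derivative_at_withinI)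
  qed
  obtain \<xi> where \<xi>: "\<xi> \<in> {0..1}" "\<psi> 1 - \<psi> 0 = \<psi>' \<xi> (1 - 0)"
    using mvt_very_simple[of 0 1 \<psi> \<psi>'] der by auto
  have "grad (x + \<xi> *\<^sub>R dd) \<bullet> dd - grad x \<bullet> dd = (grad (x + \<xi> *\<^sub>R dd) - grad x) \<bullet> dd"
    by (simp add: inner_diff_left)
  also have "\<dots> \<le> norm (grad (x + \<xi> *\<^sub>R dd) - grad x) * norm dd"
    by (rule norm_cauchy_schwarz)
  also have "\<dots> \<le> L * norm (\<xi> *\<^sub>R dd) * norm dd"
    using lip[of "x + \<xi> *\<^sub>R dd" x] by (intro mult_right_mono) auto
  also have "\<dots> = L * \<xi> * (norm dd)\<^sup>2"
    using \<xi>(1) by (simp add: power2_eq_square)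
  finally have "\<psi>' \<xi> 1 \<le> 0" by (simp add: \<psi>'_def)
  with \<xi> have "\<psi> 1 \<le> \<psi> 0" by simp
  then show ?thesis by (simp add: \<psi>_def dd_def)
qed


lemma cocoercive:
  fixes h :: "'a::real_inner \<Rightarrow> real"
  assumes cv: "convex_on UNIV h" and d: "\<And>x. (h has_derivative (\<lambda>v. G x \<bullet> v)) (at x)"
    and ub: "\<And>x y. h y \<le> h x + G x \<bullet> (y - x) + K / 2 * (norm (y - x))\<^sup>2"
    and K: "K > 0"
  shows "(norm (G x - G y))\<^sup>2 \<le> K * ((G x - G y) \<bullet> (x - y))"
proof -
  have half: "h a + G a \<bullet> (b - a) + (norm (G b - G a))\<^sup>2 / (2 * K) \<le> h b" for a b
  proof -
    define D where "D = G b - G a"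
    define z where "z = b - (1 / K) *\<^sub>R D"
    have 1: "h a + G a \<bullet> (z - a) \<le> h z" by (rule grad_ineq[OF cv d])
    have 2: "h z \<le> h b + G b \<bullet> (z - b) + K / 2 * (norm (z - b))\<^sup>2" by (rule ub)
    have zb: "z - b = - ((1 / K) *\<^sub>R D)" by (simp add: z_def)
    have e1: "G a \<bullet> (z - a) = G a \<bullet> (b - a) + G a \<bullet> (z - b)" by (simp add: inner_diff_right)
    have e2: "G b \<bullet> (z - b) - G a \<bullet> (z - b) = - (norm D)\<^sup>2 / K"
    proof -
      have "G b \<bullet> (z - b) - G a \<bullet> (z - b) = D \<bullet> (z - b)" by (simp add: D_def inner_diff_left)
      also have "\<dots> = - (D \<bullet> D) / K" by (simp add: zb)
      finally show ?thesis by (simp add: power2_norm_eq_inner)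
    qed
    have nz: "norm (z - b) = norm D / K" using K by (simp add: zb)
    have e3: "K / 2 * (norm (z - b))\<^sup>2 = (norm D)\<^sup>2 / (2 * K)"
      unfolding nz using K by (simp add: power2_eq_square)
    show ?thesis using 1 2 e1 e2 e3 by (simp add: D_def)
  qed
  have nm: "norm (G y - G x) = norm (G x - G y)" by (rule norm_minus_commute)
  have "h x + G x \<bullet> (y - x) + (norm (G x - G y))\<^sup>2 / (2 * K) + (h y + G y \<bullet> (x - y) + (norm (G x - G y))\<^sup>2 / (2 * K)) \<le> h y + h x"
    using half[of x y] half[of y x] unfolding nm by linarith
  moreover have "G x \<bullet> (y - x) + G y \<bullet> (x - y) = - ((G x - G y) \<bullet> (x - y))"
    by (simp add: algebra_simps inner_diff_left inner_diff_right)
  moreover have "(norm (G x - G y))\<^sup>2 / (2 * K) + (norm (G x - G y))\<^sup>2 / (2 * K) = (norm (G x - G y))\<^sup>2 / K"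
    by simp
  ultimately have "(norm (G x - G y))\<^sup>2 / K \<le> (G x - G y) \<bullet> (x - y)"
    by linarith
  then show ?thesis using K by (simp add: pos_divide_le_eq mult.commute)
qed


lemma final_alg:
  fixes a r s q b :: real
  assumes "0 < a" "a \<le> 1" "0 \<le> r" "0 \<le> s" "0 \<le> q" "1 \<le> a * s\<^sup>2" "q\<^sup>2 = 2 * r\<^sup>2 + b"
  shows "((1 - a) * (r + s * q) + a * r)\<^sup>2 + r\<^sup>2 + b \<le> (r + s * q)\<^sup>2"
proof -
  have e: "(1 - a) * (r + s * q) + a * r = (r + s * q) - a * s * q" by (simp add: algebra_simps)
  have "(r + s * q)\<^sup>2 - ((r + s * q) - a * s * q)\<^sup>2 = 2 * a * s * q * r + (a * s\<^sup>2) * q\<^sup>2 * (2 - a)"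
    by (simp add: algebra_simps power2_eq_square)
  moreover have "0 \<le> 2 * a * s * q * r" using assms by simp
  moreover have "q\<^sup>2 \<le> (a * s\<^sup>2) * q\<^sup>2 * (2 - a)"
  proof -
    have "1 * 1 \<le> (a * s\<^sup>2) * (2 - a)" by (rule mult_mono) (use assms in auto)
    then have "1 \<le> (a * s\<^sup>2) * (2 - a)" by simp
    then have "1 * q\<^sup>2 \<le> ((a * s\<^sup>2) * (2 - a)) * q\<^sup>2" by (intro mult_right_mono) auto
    then show ?thesis by (simp add: algebra_simps)
  qed
  moreover have "0 \<le> r\<^sup>2" by simp
  ultimately show ?thesis unfolding e using assms(7) by linarith
qed



lemma norm_diff_sq:
  fixes a b :: "'a::real_inner"
  shows "(norm (a - b))\<^sup>2 = (norm a)\<^sup>2 - 2 * (a \<bullet> b) + (norm b)\<^sup>2"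
proof -
  have "(norm (a - b))\<^sup>2 = (a - b) \<bullet> (a - b)" by (simp add: dot_square_norm)
  also have "\<dots> = a \<bullet> a - 2 * (a \<bullet> b) + b \<bullet> b"
    by (simp add: inner_diff_left inner_diff_right inner_commute)
  finally show ?thesis by (simp add: dot_square_norm)
qed

lemma interp:
  fixes A B C t l :: real
  shows "A - 2 * (t * l) * B + (t * l)\<^sup>2 * C = (1 - t) * A + t * (A - 2 * l * B + l\<^sup>2 * C) - t * (1 - t) * l\<^sup>2 * C"
  by (simp add: algebra_simps power2_eq_square)

theorem theorem2:
  fixes f :: "'a::euclidean_space \<Rightarrow> real" and grad :: "'a \<Rightarrow> 'a"
    and \<mu> L \<eta> \<sigma> r :: real and xstar x :: 'a
    and M :: "'b measure" and g :: "'b \<Rightarrow> 'a"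
  assumes mu_pos: "\<mu> > 0" and L_pos: "L > 0"
    and sc: "strongly_convex \<mu> f"
    and sm: "L_smooth L f grad"
    and xstar_min: "\<forall>y. f xstar \<le> f y"
    and xstar_r: "norm xstar \<le> r"
    and eta: "0 < \<eta>" "\<eta> \<le> 1 / L"
    and M: "prob_space M"
    and g_meas: "g \<in> borel_measurable M"
    and g_int: "integrable M g"
    and unbiased: "(\<integral>\<omega>. g \<omega> \<partial>M) = grad x"
    and var_int: "integrable M (\<lambda>\<omega>. (norm (g \<omega> - grad x))\<^sup>2)"
    and var_bd: "(\<integral>\<omega>. (norm (g \<omega> - grad x))\<^sup>2 \<partial>M) \<le> \<sigma>\<^sup>2"
    and x_R: "norm x \<le> r + sqrt (max 3 (L / \<mu>)) * sqrt (2 * r\<^sup>2 + \<sigma>\<^sup>2 / L\<^sup>2)"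
  shows "integrable M (\<lambda>\<omega>. (norm (x - \<eta> *\<^sub>R g \<omega>))\<^sup>2) \<and>
         (\<integral>\<omega>. (norm (x - \<eta> *\<^sub>R g \<omega>))\<^sup>2 \<partial>M)
           \<le> (r + sqrt (max 3 (L / \<mu>)) * sqrt (2 * r\<^sup>2 + \<sigma>\<^sup>2 / L\<^sup>2))\<^sup>2"
proof -
  define s where "s = sqrt (max 3 (L / \<mu>))"
  define q where "q = sqrt (2 * r\<^sup>2 + \<sigma>\<^sup>2 / L\<^sup>2)"
  define R where "R = r + s * q"
  have r0: "0 \<le> r" using xstar_r norm_ge_zero order_trans by blast
  have s0: "0 \<le> s" and q0: "0 \<le> q" by (simp_all add: s_def q_def)
  have q2: "q\<^sup>2 = 2 * r\<^sup>2 + \<sigma>\<^sup>2 / L\<^sup>2" unfolding q_def by (simp add: real_sqrt_pow2_iff)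
  have s2: "s\<^sup>2 = max 3 (L / \<mu>)" unfolding s_def by simp
  have xR: "norm x \<le> R" using x_R by (simp add: R_def s_def q_def)
  have dgrad: "\<And>z. (f has_derivative (\<lambda>h. grad z \<bullet> h)) (at z)"
    and lip: "\<And>z y. norm (grad z - grad y) \<le> L * norm (z - y)"
    using sm unfolding L_smooth_def by auto
  note desc = descent[OF dgrad lip]
  have gstar: "grad xstar = 0"
  proof -
    define G where "G = grad xstar"
    have "f (xstar - (1 / L) *\<^sub>R G) \<le> f xstar + G \<bullet> (- ((1 / L) *\<^sub>R G)) + L / 2 * (norm (- ((1 / L) *\<^sub>R G)))\<^sup>2"
      using desc[where x=xstar and y="xstar - (1 / L) *\<^sub>R G"] by (simp add: G_def)
    also have "\<dots> = f xstar - (norm G)\<^sup>2 / (2 * L)"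
      using L_pos by (simp add: dot_square_norm power2_eq_square field_simps)
    finally have "(norm G)\<^sup>2 / (2 * L) \<le> 0" using xstar_min by (smt (verit))
    then have "(norm G)\<^sup>2 \<le> 0" using L_pos by (simp add: divide_le_0_iff)
    then show ?thesis by (simp add: G_def)
  qed
  define h where "h z = f z - \<mu> / 2 * (norm z)\<^sup>2" for z
  define G where "G z = grad z - \<mu> *\<^sub>R z" for z
  have hcv: "convex_on UNIV h" using sc unfolding strongly_convex_def h_def by simp
  have hd: "(h has_derivative (\<lambda>v. G z \<bullet> v)) (at z)" for z
  proof -
    have n: "(\<lambda>z. \<mu> / 2 * (norm z)\<^sup>2) = (\<lambda>z. \<mu> / 2 * (z \<bullet> z))" by (simp add: power2_norm_eq_inner)
    have "((\<lambda>z. \<mu> / 2 * (z \<bullet> z)) has_derivative (\<lambda>v. \<mu> / 2 * (v \<bullet> z + z \<bullet> v))) (at z)"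
      by (auto intro!: derivative_eq_intros)
    then have "((\<lambda>z. \<mu> / 2 * (norm z)\<^sup>2) has_derivative (\<lambda>v. (\<mu> *\<^sub>R z) \<bullet> v)) (at z)"
      unfolding n by (simp add: inner_commute algebra_simps)
    from has_derivative_diff[OF dgrad this] show ?thesis
      unfolding h_def G_def by (simp add: inner_diff_left)
  qed
  have hub: "h b \<le> h a + G a \<bullet> (b - a) + (L - \<mu>) / 2 * (norm (b - a))\<^sup>2" for a b
  proof -
    define d where "d = b - a"
    have bd: "b = a + d" by (simp add: d_def)
    have n2: "(norm (a + d))\<^sup>2 = (norm a)\<^sup>2 + 2 * (a \<bullet> d) + (norm d)\<^sup>2"
      by (simp add: power2_norm_eq_inner inner_add_left inner_add_right inner_commute)
    have id: "\<mu> / 2 * (norm b)\<^sup>2 = \<mu> / 2 * (norm a)\<^sup>2 + \<mu> * (a \<bullet> d) + \<mu> / 2 * (norm d)\<^sup>2"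
      unfolding bd n2 by (simp add: algebra_simps)
    have Gi: "G a \<bullet> d = grad a \<bullet> d - \<mu> * (a \<bullet> d)" by (simp add: G_def inner_diff_left)
    have Li: "(L - \<mu>) / 2 * (norm d)\<^sup>2 = L / 2 * (norm d)\<^sup>2 - \<mu> / 2 * (norm d)\<^sup>2"
      by (simp add: field_simps)
    have "f b \<le> f a + grad a \<bullet> d + L / 2 * (norm d)\<^sup>2"
      using desc[where x=a and y=b] by (simp add: d_def)
    then show ?thesis unfolding h_def d_def[symmetric] using id Gi Li by linarith
  qed
  define K0 where "K0 = max (L - \<mu>) 0"
  have coc: "(norm (G a - G b))\<^sup>2 \<le> K0 * ((G a - G b) \<bullet> (a - b))" for a b
  proof -
    let ?n = "(norm (G a - G b))\<^sup>2" and ?c = "(G a - G b) \<bullet> (a - b)"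
    have gen: "?n \<le> K * ?c" if "K > K0" for K
    proof (rule cocoercive[OF hcv hd])
      fix a b :: 'a
      have "(L - \<mu>) / 2 * (norm (b - a))\<^sup>2 \<le> K / 2 * (norm (b - a))\<^sup>2"
        using that by (intro mult_right_mono) (auto simp: K0_def)
      then show "h b \<le> h a + G a \<bullet> (b - a) + K / 2 * (norm (b - a))\<^sup>2" using hub[of b a] by linarith
    next
      show "K > 0" using that by (simp add: K0_def)
    qed
    have c0: "0 \<le> ?c"
    proof -
      have "0 \<le> (K0 + 1) * ?c" using gen[of "K0 + 1"] by (smt (verit) zero_le_power2)
      then show ?thesis by (simp add: zero_le_mult_iff K0_def) (smt (verit))
    qed
    show ?thesis
    proof (rule field_le_epsilon)
      fix e :: real assume e: "0 < e"
      have "?n \<le> (K0 + e / (?c + 1)) * ?c" using gen e c0 by simp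
      also have "\<dots> = K0 * ?c + e * (?c / (?c + 1))" by (simp add: algebra_simps)
      also have "\<dots> \<le> K0 * ?c + e * 1" using e c0 by (intro add_left_mono mult_left_mono) auto
      finally show "?n \<le> K0 * ?c + e" by simp
    qed
  qed
  have muL: "\<mu> \<le> L"
  proof (rule ccontr)
    assume "\<not> \<mu> \<le> L"
    then have K00: "K0 = 0" by (simp add: K0_def)
    obtain e :: 'a where e: "e \<in> Basis" using nonempty_Basis by blast
    have "(norm (G (x + e) - G x))\<^sup>2 \<le> 0" using coc[of "x + e" x] K00 by simp
    then have "G (x + e) = G x" by simp
    then have "grad (x + e) - grad x = \<mu> *\<^sub>R e" by (simp add: G_def algebra_simps)
    then have "\<mu> \<le> L" using lip[of "x + e" x] e mu_pos by (simp add: norm_Basis)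
    with \<open>\<not> \<mu> \<le> L\<close> show False by simp
  qed
  have K0e: "K0 = L - \<mu>" using muL by (simp add: K0_def)
  define u where "u = x - xstar"
  define a where "a = \<mu> / L"
  define p where "p = (1 / L) *\<^sub>R (grad x - \<mu> *\<^sub>R u)"
  have Gdiff: "G x - G xstar = grad x - \<mu> *\<^sub>R u" by (simp add: G_def gstar u_def algebra_simps)
  have key0: "(norm (grad x - \<mu> *\<^sub>R u))\<^sup>2 \<le> (L - \<mu>) * ((grad x - \<mu> *\<^sub>R u) \<bullet> u)"
    using coc[of x xstar] by (simp add: Gdiff K0e u_def)
  have a0: "0 < a" and a1: "a \<le> 1" using mu_pos L_pos muL by (simp_all add: a_def)
  have key: "(norm p)\<^sup>2 \<le> (1 - a) * (u \<bullet> p)"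
  proof -
    have "(norm p)\<^sup>2 = (norm (grad x - \<mu> *\<^sub>R u))\<^sup>2 / L\<^sup>2"
      using L_pos by (simp add: p_def power_divide)
    also have "\<dots> \<le> (L - \<mu>) * ((grad x - \<mu> *\<^sub>R u) \<bullet> u) / L\<^sup>2"
      using key0 L_pos by (simp add: divide_right_mono)
    also have "\<dots> = (1 - a) * (u \<bullet> p)"
    proof -
      define c where "c = (grad x - \<mu> *\<^sub>R u) \<bullet> u"
      have up: "u \<bullet> p = c / L" unfolding p_def c_def by (simp only: inner_scaleR_right inner_commute) simp
      show ?thesis unfolding up c_def[symmetric] using L_pos by (simp add: a_def field_simps power2_eq_square)
    qed
    finally show ?thesis .
  qed
  define w where "w = (1 - a) *\<^sub>R x + a *\<^sub>R xstar"
  have xv: "x - (1 / L) *\<^sub>R grad x = w - p"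
    using L_pos by (simp add: w_def p_def a_def u_def algebra_simps)
  have wp: "w \<bullet> p = (1 - a) * (u \<bullet> p) + xstar \<bullet> p"
    by (simp add: w_def u_def algebra_simps inner_diff_left inner_add_left)
  have step1: "(norm (x - (1 / L) *\<^sub>R grad x))\<^sup>2 \<le> (norm w)\<^sup>2 + r\<^sup>2"
  proof -
    have "(norm (w - p))\<^sup>2 = (norm w)\<^sup>2 - 2 * (w \<bullet> p) + (norm p)\<^sup>2"
      by (simp add: power2_norm_eq_inner algebra_simps inner_commute)
    also have "\<dots> = (norm w)\<^sup>2 - 2 * ((1 - a) * (u \<bullet> p)) - 2 * (xstar \<bullet> p) + (norm p)\<^sup>2"
      by (simp add: wp)
    also have "\<dots> \<le> (norm w)\<^sup>2 - (norm p)\<^sup>2 + 2 * (r * norm p)"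
    proof -
      have "- (xstar \<bullet> p) \<le> norm xstar * norm p"
        using norm_cauchy_schwarz[of "- xstar" p] by simp
      also have "\<dots> \<le> r * norm p" using xstar_r by (intro mult_right_mono) auto
      finally show ?thesis using key by linarith
    qed
    also have "\<dots> \<le> (norm w)\<^sup>2 + r\<^sup>2"
    proof -
      have "0 \<le> (norm p - r)\<^sup>2" by simp
      moreover have "(norm p - r)\<^sup>2 = (norm p)\<^sup>2 - 2 * (r * norm p) + r\<^sup>2" by (simp add: power2_diff algebra_simps)
      ultimately show ?thesis by linarith
    qed
    finally show ?thesis using xv by simp
  qed
  have wn: "norm w \<le> (1 - a) * R + a * r"
  proof -
    have "norm w \<le> norm ((1 - a) *\<^sub>R x) + norm (a *\<^sub>R xstar)" unfolding w_def by (rule norm_triangle_ineq)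
    also have "\<dots> = (1 - a) * norm x + a * norm xstar" using a0 a1 by simp
    also have "\<dots> \<le> (1 - a) * R + a * r"
      using a0 a1 xR xstar_r by (intro add_mono mult_left_mono) auto
    finally show ?thesis .
  qed
  have as2: "1 \<le> a * s\<^sup>2"
  proof -
    have "L / \<mu> \<le> s\<^sup>2" using s2 by simp
    then have "a * (L / \<mu>) \<le> a * s\<^sup>2" using a0 by (intro mult_left_mono) auto
    moreover have "a * (L / \<mu>) = 1" using mu_pos L_pos by (simp add: a_def)
    ultimately show ?thesis by linarith
  qed
  have Rnn: "0 \<le> (1 - a) * R + a * r" using a0 a1 r0 s0 q0 by (simp add: R_def)
  have step2: "(norm (x - (1 / L) *\<^sub>R grad x))\<^sup>2 + \<sigma>\<^sup>2 / L\<^sup>2 \<le> R\<^sup>2"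
  proof -
    have "(norm w)\<^sup>2 \<le> ((1 - a) * R + a * r)\<^sup>2" using wn by (simp add: power_mono)
    moreover have "((1 - a) * R + a * r)\<^sup>2 + r\<^sup>2 + \<sigma>\<^sup>2 / L\<^sup>2 \<le> R\<^sup>2"
      unfolding R_def by (rule final_alg[OF a0 a1 r0 s0 q0 as2 q2])
    ultimately show ?thesis using step1 by linarith
  qed
  \<comment> \<open>interpolation in eta\<close>
  define y0 where "y0 = x - \<eta> *\<^sub>R grad x"
  have step3: "(norm y0)\<^sup>2 + \<eta>\<^sup>2 * \<sigma>\<^sup>2 \<le> R\<^sup>2"
  proof -
    define t where "t = \<eta> * L"
    have t0: "0 \<le> t" and t1: "t \<le> 1" using eta L_pos by (simp_all add: t_def field_simps)
    have phi: "(norm (x - e *\<^sub>R grad x))\<^sup>2 + e\<^sup>2 * \<sigma>\<^sup>2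
       = (norm x)\<^sup>2 - 2 * e * (x \<bullet> grad x) + e\<^sup>2 * ((norm (grad x))\<^sup>2 + \<sigma>\<^sup>2)" for e
      by (simp add: norm_diff_sq power_mult_distrib algebra_simps)
    have etat: "\<eta> = t * (1 / L)" using L_pos by (simp add: t_def)
    let ?A = "(norm x)\<^sup>2" and ?B = "x \<bullet> grad x" and ?C = "(norm (grad x))\<^sup>2 + \<sigma>\<^sup>2"
    have "(norm y0)\<^sup>2 + \<eta>\<^sup>2 * \<sigma>\<^sup>2 = ?A - 2 * \<eta> * ?B + \<eta>\<^sup>2 * ?C" unfolding y0_def by (rule phi)
    also have "\<dots> = (1 - t) * ?A + t * (?A - 2 * (1 / L) * ?B + (1 / L)\<^sup>2 * ?C) - t * (1 - t) * (1 / L)\<^sup>2 * ?C"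
      unfolding etat by (rule interp)
    also have "\<dots> \<le> (1 - t) * ?A + t * (?A - 2 * (1 / L) * ?B + (1 / L)\<^sup>2 * ?C)"
      using t0 t1 by (simp add: mult_nonneg_nonneg)
    also have "\<dots> \<le> (1 - t) * R\<^sup>2 + t * R\<^sup>2"
    proof (intro add_mono mult_left_mono)
      show "?A \<le> R\<^sup>2" using xR by (simp add: power_mono)
      show "?A - 2 * (1 / L) * ?B + (1 / L)\<^sup>2 * ?C \<le> R\<^sup>2"
        using step2 phi[of "1 / L"] by (simp add: power_divide)
    qed (use t0 t1 in auto)
    finally show ?thesis by (simp add: algebra_simps)
  qed
  interpret prob_space M by (rule M)
  have eq: "(norm (x - \<eta> *\<^sub>R g \<omega>))\<^sup>2 = (norm y0)\<^sup>2 - 2 * \<eta> * (y0 \<bullet> (g \<omega> - grad x)) + \<eta>\<^sup>2 * (norm (g \<omega> - grad x))\<^sup>2" for \<omega>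
  proof -
    have "x - \<eta> *\<^sub>R g \<omega> = y0 - \<eta> *\<^sub>R (g \<omega> - grad x)" by (simp add: y0_def algebra_simps)
    then show ?thesis
      by (simp only: norm_diff_sq norm_scaleR inner_scaleR_right power_mult_distrib) (simp add: algebra_simps)
  qed
  have ic: "integrable M (\<lambda>\<omega>. g \<omega> - grad x)" using g_int by simp
  have i1: "integrable M (\<lambda>\<omega>. y0 \<bullet> (g \<omega> - grad x))" using ic by simp
  have int: "integrable M (\<lambda>\<omega>. (norm y0)\<^sup>2 - 2 * \<eta> * (y0 \<bullet> (g \<omega> - grad x)) + \<eta>\<^sup>2 * (norm (g \<omega> - grad x))\<^sup>2)"
    using i1 var_int by (intro Bochner_Integration.integrable_add Bochner_Integration.integrable_diff integrable_mult_right) auto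
  have ig: "(\<integral>\<omega>. y0 \<bullet> (g \<omega> - grad x) \<partial>M) = 0"
    using ic unbiased by (simp add: Bochner_Integration.integral_diff[OF g_int] prob_space)
  have "(\<integral>\<omega>. (norm y0)\<^sup>2 - 2 * \<eta> * (y0 \<bullet> (g \<omega> - grad x)) + \<eta>\<^sup>2 * (norm (g \<omega> - grad x))\<^sup>2 \<partial>M)
      = (norm y0)\<^sup>2 - 2 * \<eta> * (\<integral>\<omega>. y0 \<bullet> (g \<omega> - grad x) \<partial>M) + \<eta>\<^sup>2 * (\<integral>\<omega>. (norm (g \<omega> - grad x))\<^sup>2 \<partial>M)"
    using i1 var_int by (simp add: Bochner_Integration.integral_add Bochner_Integration.integral_diff prob_space)
  also have "\<dots> \<le> (norm y0)\<^sup>2 + \<eta>\<^sup>2 * \<sigma>\<^sup>2"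
    using mult_left_mono[OF var_bd, of "\<eta>\<^sup>2"] by (simp add: ig)
  also have "\<dots> \<le> R\<^sup>2" by (rule step3)
  finally have "(\<integral>\<omega>. (norm (x - \<eta> *\<^sub>R g \<omega>))\<^sup>2 \<partial>M) \<le> R\<^sup>2" by (simp add: eq)
  moreover have "integrable M (\<lambda>\<omega>. (norm (x - \<eta> *\<^sub>R g \<omega>))\<^sup>2)" using int by (simp add: eq)
  ultimately show ?thesis by (simp add: R_def s_def q_def)
qed

end
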